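(* Let $n\ge 3$ and $q\ge 2$ be integers, $S_1=\sqrt{q^2+4(q-1)(n-2)}$, $S_2=\sqrt{q^2+4(q-1)(n-3)}$. Let $d$ be an integer and define $j$ by $d=n-1-\frac{n-2+j}{q}$, with $j\in\left[\frac{S_1-q}{2},\frac{S_2+q}{2}-1\right)$, and put $s=1-\frac{2d}{n}$. Let $d_0=n-1-\frac{(j-q+1)(n-2)}{qj}$, let $e$ be the unique rational number in $(0,1]$ such that $b:=d_0+e$ is an integer, and define $$f(t)=(t+1)\Big(t-1+\tfrac{2b}{n}\Big)\Big(t-1+\tfrac{2(b-1)}{n}\Big)(t-s)=\sum_{i=0}^4 f_iQ_i^{(n,q)}(t).$$ Provided $f_i\ge 0$ for $i=1,2,3,4$, we have $$A_q(n,s)\le\frac{q^3b(b-1)\big(n(q-1)-j-q+2\big)}{(1-j)q^2b^2+C_1qb-C_2},$$ where $C_1=j(q-1)(2n-1)+j-q$ and $C_2=(q-1)(n-1)[(q-1)(j+1)n+2(j-q+1)]$.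
   Context: $K_i^{(n,q)}(z)=\sum_{l=0}^{i}(-1)^l(q-1)^{i-l}\binom{z}{l}\binom{n-z}{i-l}$, $r_i=(q-1)^i\binom{n}{i}$, $Q_i^{(n,q)}(t)=\frac{1}{r_i}K_i^{(n,q)}\!\big(\tfrac{n(1-t)}{2}\big)$; real polynomials of degree $\le n$ have a unique expansion in the $Q_i^{(n,q)}$. $A_q(n,s)$ is the maximum cardinality of a code $C$ in the $q$-ary Hamming space of length $n$ with $1-\frac{2d(x,y)}{n}\le s$ for all distinct $x,y\in C$, $d$ the Hamming distance. *)

theory Defs
  imports Complex_Main
begin

definition hamming_space :: "nat \<Rightarrow> nat \<Rightarrow> nat list set" where
  "hamming_space q n = {xs. length xs = n \<and> set xs \<subseteq> {..<q}}"

definition hamming_dist :: "nat list \<Rightarrow> nat list \<Rightarrow> nat" where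
  "hamming_dist x y = card {i. i < length x \<and> x ! i \<noteq> y ! i}"

definition is_code :: "nat \<Rightarrow> nat \<Rightarrow> real \<Rightarrow> nat list set \<Rightarrow> bool" where
  "is_code q n s C \<longleftrightarrow> C \<subseteq> hamming_space q n \<and>
     (\<forall>x\<in>C. \<forall>y\<in>C. x \<noteq> y \<longrightarrow> 1 - 2 * real (hamming_dist x y) / real n \<le> s)"

definition A_q :: "nat \<Rightarrow> nat \<Rightarrow> real \<Rightarrow> nat" where
  "A_q q n s = Max {card C | C. is_code q n s C}"

definition krawtchouk :: "nat \<Rightarrow> nat \<Rightarrow> nat \<Rightarrow> real \<Rightarrow> real" where
  "krawtchouk n q i z = (\<Sum>l=0..i. (-1) ^ l * (real q - 1) ^ (i - l) *
       (z gchoose l) * ((real n - z) gchoose (i - l)))"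

definition r_coef :: "nat \<Rightarrow> nat \<Rightarrow> nat \<Rightarrow> real" where
  "r_coef n q i = (real q - 1) ^ i * real (n choose i)"

definition Qpoly :: "nat \<Rightarrow> nat \<Rightarrow> nat \<Rightarrow> real \<Rightarrow> real" where
  "Qpoly n q i t = krawtchouk n q i (real n * (1 - t) / 2) / r_coef n q i"

definition S1 :: "nat \<Rightarrow> nat \<Rightarrow> real" where
  "S1 n q = sqrt ((real q)^2 + 4 * (real q - 1) * (real n - 2))"

definition S2 :: "nat \<Rightarrow> nat \<Rightarrow> real" where
  "S2 n q = sqrt ((real q)^2 + 4 * (real q - 1) * (real n - 3))"

text \<open>j is determined by d = n - 1 - (n - 2 + j)/q.\<close>
definition jpar :: "nat \<Rightarrow> nat \<Rightarrow> int \<Rightarrow> real" where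
  "jpar n q d = real q * (real n - 1 - of_int d) - (real n - 2)"

definition d0par :: "nat \<Rightarrow> nat \<Rightarrow> real \<Rightarrow> real" where
  "d0par n q j = real n - 1 - (j - real q + 1) * (real n - 2) / (real q * j)"

definition fpoly :: "nat \<Rightarrow> int \<Rightarrow> real \<Rightarrow> real \<Rightarrow> real" where
  "fpoly n b s t = (t + 1) * (t - 1 + 2 * of_int b / real n)
                   * (t - 1 + 2 * (of_int b - 1) / real n) * (t - s)"

definition C1 :: "nat \<Rightarrow> nat \<Rightarrow> real \<Rightarrow> real" where
  "C1 n q j = j * (real q - 1) * (2 * real n - 1) + j - real q"

definition C2 :: "nat \<Rightarrow> nat \<Rightarrow> real \<Rightarrow> real" where
  "C2 n q j = (real q - 1) * (real n - 1) *
              ((real q - 1) * (j + 1) * real n + 2 * (j - real q + 1))"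

end

theory Submission
  imports Defs "HOL-Computational_Algebra.Polynomial"
begin



definition wz :: "nat \<Rightarrow> complex" where "wz q = cis (2*pi/real q)"

lemma zeta_sum:
  assumes q: "q \<ge> 1" and u: "u < q" and v: "v < q"
  shows "(\<Sum>a<q. (wz q ^ u * cnj (wz q) ^ v) ^ a) = (if u = v then of_nat q else 0)"
proof -
  define \<zeta> where "\<zeta> = wz q ^ u * cnj (wz q) ^ v"
  have z: "\<zeta> = cis (2*pi*(real u - real v)/real q)"
    unfolding \<zeta>_def wz_def by (simp add: DeMoivre cis_cnj cis_mult diff_divide_distrib algebra_simps)
  show ?thesis
  proof (cases "u = v")
    case True
    then have "\<zeta> = 1" using z by simp
    then have "(\<Sum>a<q. \<zeta> ^ a) = of_nat q" by simp
    then show ?thesis using True unfolding \<zeta>_def by simp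
  next
    case False
    have zq: "\<zeta> ^ q = 1"
    proof -
      have "\<zeta> ^ q = cis (2*pi*of_int (int u - int v))" using z q
        by (simp add: DeMoivre)
      also have "\<dots> = 1" by (rule cis_multiple_2pi) simp
      finally show ?thesis .
    qed
    have z1: "\<zeta> \<noteq> 1"
    proof
      assume "\<zeta> = 1"
      then have "cos (2*pi*(real u - real v)/real q) = 1"
        using z by (metis Re_complex_of_real cis.sel(1) one_complex.sel(1))
      then obtain m :: int where m: "2*pi*(real u - real v)/real q = real_of_int m * 2 * pi"
        using cos_one_2pi_int by auto
      then have "(real u - real v) * (2*pi) = (m * real q) * (2*pi)" using q by (simp add: field_simps)
      then have "real u - real v = m * real q" by simp
      then have e: "int u - int v = m * int q" by (metis of_int_eq_iff of_int_mult of_int_of_nat_eq of_int_diff)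
      have "\<bar>int u - int v\<bar> < int q" using u v by linarith
      then have "\<bar>m\<bar> * int q < int q" using e by (simp add: abs_mult)
      then have "\<bar>m\<bar> * int q < 1 * int q" by simp
      then have "\<bar>m\<bar> < 1" by (rule mult_right_less_imp_less) simp
      then have "m = 0" by simp
      then show False using e False by simp
    qed
    have "(\<Sum>a<q. \<zeta> ^ a) = 0" using geometric_sum[OF z1, of q] zq by simp
    then show ?thesis using False unfolding \<zeta>_def by simp
  qed
qed

lemma monom_sum: "(\<Sum>a\<in>A. monom (f a) k) = monom (\<Sum>a\<in>A. f a) k"
  by (rule poly_eqI) (simp add: coeff_sum coeff_monom)

lemma coord_poly:
  assumes q: "q \<ge> 1" and u: "u < q" and v: "v < q"
  shows "(\<Sum>a<q. monom (wz q ^ (a*u) * cnj (wz q ^ (a*v))) (if a = 0 then 0 else 1))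
     = (if u = v then [:1, of_nat q - 1:] else [:1, -1:])"
proof -
  define \<zeta> where "\<zeta> = wz q ^ u * cnj (wz q) ^ v"
  have c: "wz q ^ (a*u) * cnj (wz q ^ (a*v)) = \<zeta> ^ a" for a
    unfolding \<zeta>_def by (simp add: power_mult_distrib power_mult[symmetric] mult.commute)
  obtain q' where q': "q = Suc q'" using q by (cases q) auto
  have S: "(\<Sum>a<q. \<zeta> ^ a) = (if u = v then of_nat q else 0)"
    using zeta_sum[OF q u v] unfolding \<zeta>_def .
  have S': "(\<Sum>a<q'. \<zeta> ^ Suc a) = (if u = v then of_nat q else 0) - 1"
  proof -
    have "(\<Sum>a<Suc q'. \<zeta> ^ a) = 1 + (\<Sum>a<q'. \<zeta> ^ Suc a)"
      by (simp only: sum.lessThan_Suc_shift power_0)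
    then show ?thesis using S unfolding q' by (simp only:) simp
  qed
  have "(\<Sum>a<q. monom (wz q ^ (a*u) * cnj (wz q ^ (a*v))) (if a = 0 then 0 else 1))
      = 1 + (\<Sum>a<q'. monom (\<zeta> ^ Suc a) 1)"
  proof -
    have "(\<Sum>a<q. monom (wz q ^ (a*u) * cnj (wz q ^ (a*v))) (if a = 0 then 0 else 1))
      = (\<Sum>a<q. monom (\<zeta> ^ a) (if a = 0 then 0 else 1))" by (simp only: c)
    also have "\<dots> = (\<Sum>a<Suc q'. monom (\<zeta> ^ a) (if a = 0 then 0 else 1))" by (simp only: q')
    also have "\<dots> = monom (\<zeta>^0) 0 + (\<Sum>a<q'. monom (\<zeta> ^ Suc a) (if Suc a = 0 then 0 else 1))"
      by (simp only: sum.lessThan_Suc_shift) simp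
    finally show ?thesis by (simp add: monom_0 one_pCons)
  qed
  also have "\<dots> = 1 + monom ((if u = v then of_nat q else 0) - 1) 1"
    by (simp only: monom_sum S')
  also have "\<dots> = (if u = v then [:1, of_nat q - 1:] else [:1, -1:])"
    by (rule poly_eqI) (auto simp: coeff_monom coeff_pCons split: nat.splits)
  finally show ?thesis .
qed

fun ch :: "complex \<Rightarrow> nat list \<Rightarrow> nat list \<Rightarrow> complex" where
  "ch w (a#z) (u#x) = w ^ (a*u) * ch w z x"
| "ch w _ _ = 1"

definition wt :: "nat list \<Rightarrow> nat" where "wt z = length (filter (\<lambda>a. a \<noteq> 0) z)"

lemma wt_Nil[simp]: "wt [] = 0" and wt_Cons[simp]: "wt (a#z) = (if a = 0 then 0 else 1) + wt z"
  by (auto simp: wt_def)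

lemma hs0: "hamming_space q 0 = {[]}" by (auto simp: hamming_space_def)

lemma hsSuc: "hamming_space q (Suc n) = (\<lambda>(a,z). a#z) ` ({..<q} \<times> hamming_space q n)"
  by (auto simp: hamming_space_def length_Suc_conv image_iff)

lemma hs_finite: "finite (hamming_space q n)"
  unfolding hamming_space_def using finite_lists_length_eq[of "{..<q}" n] by (simp add: conj_commute)

lemma hd_Nil[simp]: "hamming_dist [] y = 0" by (simp add: hamming_dist_def)

lemma hd_Cons: "hamming_dist (u#x) (v#y) = (if u = v then 0 else 1) + hamming_dist x y"
proof -
  have e: "{i. i < length (u#x) \<and> (u#x)!i \<noteq> (v#y)!i}
     = (if u = v then {} else {0}) \<union> Suc ` {i. i < length x \<and> x!i \<noteq> y!i}"
    by (auto simp: less_Suc_eq_0_disj image_iff)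
  show ?thesis unfolding hamming_dist_def e
    by (simp add: card_image)
qed

lemma hd_le: "hamming_dist x y \<le> length x"
  unfolding hamming_dist_def by (rule order_trans[OF card_mono[of "{..<length x}"]]) auto

lemma GF:
  assumes q: "q \<ge> 1"
  shows "x \<in> hamming_space q n \<Longrightarrow> y \<in> hamming_space q n \<Longrightarrow>
    (\<Sum>z\<in>hamming_space q n. monom (ch (wz q) z x * cnj (ch (wz q) z y)) (wt z))
     = [:1,-1:] ^ hamming_dist x y * [:1, of_nat q - 1:] ^ (n - hamming_dist x y)"
proof (induction n arbitrary: x y)
  case 0
  then show ?case by (simp add: hs0 monom_0 one_pCons)
next
  case (Suc n)
  from Suc.prems obtain u x' where x: "x = u#x'" "u < q" "x' \<in> hamming_space q n"
    by (auto simp: hamming_space_def length_Suc_conv)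
  from Suc.prems obtain v y' where y: "y = v#y'" "v < q" "y' \<in> hamming_space q n"
    by (auto simp: hamming_space_def length_Suc_conv)
  define G where "G = (\<Sum>z\<in>hamming_space q n. monom (ch (wz q) z x' * cnj (ch (wz q) z y')) (wt z))"
  have inj: "inj_on (\<lambda>(a,z). a#z) ({..<q} \<times> hamming_space q n)" by (auto simp: inj_on_def)
  have "(\<Sum>z\<in>hamming_space q (Suc n). monom (ch (wz q) z x * cnj (ch (wz q) z y)) (wt z))
     = (\<Sum>(a,z)\<in>{..<q} \<times> hamming_space q n. monom (ch (wz q) (a#z) x * cnj (ch (wz q) (a#z) y)) (wt (a#z)))"
    unfolding hsSuc by (subst sum.reindex[OF inj]) (simp add: case_prod_beta)
  also have "\<dots> = (\<Sum>a<q. \<Sum>z\<in>hamming_space q n.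
        monom (wz q ^ (a*u) * cnj (wz q ^ (a*v))) (if a = 0 then 0 else 1) *
        monom (ch (wz q) z x' * cnj (ch (wz q) z y')) (wt z))"
    unfolding sum.cartesian_product[symmetric] x y by (simp add: mult_monom mult_ac add.commute)
  also have "\<dots> = (\<Sum>a<q. monom (wz q ^ (a*u) * cnj (wz q ^ (a*v))) (if a = 0 then 0 else 1)) * G"
    unfolding G_def by (simp only: sum_distrib_left sum_distrib_right) (rule sum.swap)
  also have "\<dots> = (if u = v then [:1, of_nat q - 1:] else [:1, -1:]) * G"
    using coord_poly[OF q x(2) y(2)] by simp
  also have "G = [:1,-1:] ^ hamming_dist x' y' * [:1, of_nat q - 1:] ^ (n - hamming_dist x' y')"
    unfolding G_def by (rule Suc.IH[OF x(3) y(3)])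
  finally have A: "(\<Sum>z\<in>hamming_space q (Suc n). monom (ch (wz q) z x * cnj (ch (wz q) z y)) (wt z)) =
      (if u = v then [:1, of_nat q - 1:] else [:1, -1:]) * ([:1,-1:] ^ hamming_dist x' y' * [:1, of_nat q - 1:] ^ (n - hamming_dist x' y'))" .
  have le: "hamming_dist x' y' \<le> n" using hd_le[of x' y'] x(3) by (simp add: hamming_space_def)
  show ?case
  proof (cases "u = v")
    case True
    then have h: "hamming_dist x y = hamming_dist x' y'" unfolding x(1) y(1) hd_Cons by simp
    show ?thesis unfolding A h using True
      by (simp only: if_True refl Suc_diff_le[OF le] power_Suc mult_ac)
  next
    case False
    then have h: "hamming_dist x y = Suc (hamming_dist x' y')" unfolding x(1) y(1) hd_Cons by simp
    show ?thesis unfolding A h using False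
      by (simp only: if_False diff_Suc_Suc power_Suc mult_ac)
  qed
qed

lemma coeff_lin_pow: "coeff ([:1, c:] ^ m) l = of_nat (m choose l) * c ^ l"
proof (induction m arbitrary: l)
  case 0
  then show ?case by (cases l) auto
next
  case (Suc m)
  show ?case
  proof (cases l)
    case 0
    then show ?thesis using Suc by simp
  next
    case (Suc l')
    then show ?thesis using Suc.IH by (simp add: algebra_simps)
  qed
qed

lemma kraw_coeff:
  assumes "k \<le> n"
  shows "complex_of_real (krawtchouk n q i (real k)) = coeff ([:1,-1:] ^ k * [:1, of_nat q - 1:] ^ (n-k)) i"
proof -
  have "krawtchouk n q i (real k) = (\<Sum>l\<le>i. (of_nat (k choose l) * (-1) ^ l) * (of_nat ((n-k) choose (i-l)) * (real q - 1) ^ (i-l)))"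
    unfolding krawtchouk_def using assms
    by (simp add: binomial_gbinomial of_nat_diff atLeast0AtMost mult_ac)
  then show ?thesis
    by (simp add: coeff_mult coeff_lin_pow[of "-1", simplified] coeff_lin_pow)
qed

lemma delsarte:
  assumes q: "q \<ge> 1" and C: "C \<subseteq> hamming_space q n"
  shows "0 \<le> (\<Sum>x\<in>C. \<Sum>y\<in>C. krawtchouk n q i (real (hamming_dist x y)))"
proof -
  have fC: "finite C" using C hs_finite finite_subset by blast
  define H where "H = hamming_space q n"
  define S where "S z = (\<Sum>x\<in>C. ch (wz q) z x)" for z
  have len: "x \<in> C \<Longrightarrow> hamming_dist x y \<le> n" for x y
    using C hd_le[of x y] by (auto simp: hamming_space_def)
  have "complex_of_real (\<Sum>x\<in>C. \<Sum>y\<in>C. krawtchouk n q i (real (hamming_dist x y)))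
      = (\<Sum>x\<in>C. \<Sum>y\<in>C. coeff (\<Sum>z\<in>H. monom (ch (wz q) z x * cnj (ch (wz q) z y)) (wt z)) i)"
    unfolding of_real_sum H_def
    by (intro sum.cong refl, subst GF[OF q], use C in auto, rule kraw_coeff, rule len)
  also have "\<dots> = (\<Sum>x\<in>C. \<Sum>y\<in>C. \<Sum>z\<in>H. if wt z = i then ch (wz q) z x * cnj (ch (wz q) z y) else 0)"
    by (simp add: coeff_sum coeff_monom eq_commute)
  also have "\<dots> = (\<Sum>z\<in>H. if wt z = i then S z * cnj (S z) else 0)"
  proof -
    have "(\<Sum>x\<in>C. \<Sum>y\<in>C. \<Sum>z\<in>H. if wt z = i then ch (wz q) z x * cnj (ch (wz q) z y) else 0)
       = (\<Sum>x\<in>C. \<Sum>z\<in>H. \<Sum>y\<in>C. if wt z = i then ch (wz q) z x * cnj (ch (wz q) z y) else 0)"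
      by (rule sum.cong[OF refl], rule sum.swap)
    also have "\<dots> = (\<Sum>z\<in>H. \<Sum>x\<in>C. \<Sum>y\<in>C. if wt z = i then ch (wz q) z x * cnj (ch (wz q) z y) else 0)"
      by (rule sum.swap)
    also have "\<dots> = (\<Sum>z\<in>H. if wt z = i then S z * cnj (S z) else 0)"
      unfolding S_def cnj_sum sum_product by (intro sum.cong refl) auto
    finally show ?thesis .
  qed
  also have "\<dots> = complex_of_real (\<Sum>z\<in>H. if wt z = i then (norm (S z))^2 else 0)"
    unfolding of_real_sum by (intro sum.cong refl) (simp add: complex_norm_square[symmetric] del: of_real_power)
  finally have e: "(\<Sum>x\<in>C. \<Sum>y\<in>C. krawtchouk n q i (real (hamming_dist x y))) = (\<Sum>z\<in>H. if wt z = i then (norm (S z))^2 else 0)"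
    using of_real_eq_iff by blast
  show ?thesis unfolding e by (intro sum_nonneg) auto
qed



lemma g2: "(x::real) gchoose Suc (Suc 0) = x*(x-1)/2"
  by (simp add: gbinomial_prod_rev numeral_eq_Suc atLeast0_lessThan_Suc)
lemma g3: "(x::real) gchoose Suc (Suc (Suc 0)) = x*(x-1)*(x-2)/6"
  by (simp add: gbinomial_prod_rev numeral_eq_Suc atLeast0_lessThan_Suc algebra_simps)
lemma g4: "(x::real) gchoose Suc (Suc (Suc (Suc 0))) = x*(x-1)*(x-2)*(x-3)/24"
  by (simp add: gbinomial_prod_rev numeral_eq_Suc atLeast0_lessThan_Suc algebra_simps)


definition Wt :: "nat \<Rightarrow> nat \<Rightarrow> nat \<Rightarrow> real" where
  "Wt n q k = (let a = real q - 1; Q = real q; N = real n; N2 = N*(N-1); N3 = N2*(N-2); N4 = N3*(N-3) in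
     if k = 0 then 24*Q^4 - 24*N*a*Q^3 + 12*N2*a^2*Q^2 - 4*N3*a^3*Q + N4*a^4
     else if k = 1 then 24*N*a*Q^3 - 24*N2*a^2*Q^2 + 12*N3*a^3*Q - 4*N4*a^4
     else if k = 2 then 12*N2*a^2*Q^2 - 12*N3*a^3*Q + 6*N4*a^4
     else if k = 3 then 4*N3*a^3*Q - 4*N4*a^4
     else if k = 4 then N4*a^4 else 0)"

lemma quad0: "(\<Sum>k<5. Wt n q k * krawtchouk n q 0 (real k)) = 24 * real q ^ 4"
  by (simp add: Wt_def krawtchouk_def numeral_eq_Suc lessThan_Suc Let_def algebra_simps)



lemma K0: "krawtchouk n q 0 z = 1" by (simp add: krawtchouk_def)

lemma K1: "krawtchouk n q 1 z = (real q - 1) * (real n - z) - z"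
  by (simp add: krawtchouk_def)
lemma K2: "krawtchouk n q 2 z = (real q - 1)^2 * ((real n - z)*(real n - z - 1)/2) - (real q - 1) * z * (real n - z) + z*(z-1)/2"
  unfolding krawtchouk_def by (simp add: numeral_eq_Suc atLeast0_atMost_Suc_eq_insert_0 atMost_Suc g2 g3 g4 field_simps)
lemma K3: "krawtchouk n q 3 z = (real q - 1)^3 * ((real n - z)*(real n - z - 1)*(real n - z - 2)/6)
   - (real q - 1)^2 * z * ((real n - z)*(real n - z - 1)/2) + (real q - 1) * (z*(z-1)/2) * (real n - z)
   - z*(z-1)*(z-2)/6"
  unfolding krawtchouk_def by (simp add: numeral_eq_Suc atLeast0_atMost_Suc_eq_insert_0 atMost_Suc g2 g3 g4 field_simps)
lemma K4: "krawtchouk n q 4 z = (real q - 1)^4 * ((real n - z)*(real n - z - 1)*(real n - z - 2)*(real n - z - 3)/24)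
   - (real q - 1)^3 * z * ((real n - z)*(real n - z - 1)*(real n - z - 2)/6)
   + (real q - 1)^2 * (z*(z-1)/2) * ((real n - z)*(real n - z - 1)/2)
   - (real q - 1) * (z*(z-1)*(z-2)/6) * (real n - z)
   + z*(z-1)*(z-2)*(z-3)/24"
  unfolding krawtchouk_def by (simp add: numeral_eq_Suc atLeast0_atMost_Suc_eq_insert_0 atMost_Suc g2 g3 g4 field_simps)

lemma K1_0: "24 * krawtchouk n q 1 0 = (24*real n*(real q - 1))"
  unfolding K1 by (simp add: field_simps) algebra?

lemma K1_1: "24 * krawtchouk n q 1 1 = (24*real n*(real q - 1) -24*(real q - 1) -24)"
  unfolding K1 by (simp add: field_simps) algebra?

lemma K1_2: "24 * krawtchouk n q 1 2 = (24*real n*(real q - 1) -48*(real q - 1) -48)"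
  unfolding K1 by (simp add: field_simps) algebra?

lemma K1_3: "24 * krawtchouk n q 1 3 = (24*real n*(real q - 1) -72*(real q - 1) -72)"
  unfolding K1 by (simp add: field_simps) algebra?

lemma K1_4: "24 * krawtchouk n q 1 4 = (24*real n*(real q - 1) -96*(real q - 1) -96)"
  unfolding K1 by (simp add: field_simps) algebra?

lemma K2_0: "24 * krawtchouk n q 2 0 = (12*real n*real n*(real q - 1)*(real q - 1) -12*real n*(real q - 1)*(real q - 1))"
  unfolding K2 by (simp add: field_simps) algebra?

lemma K2_1: "24 * krawtchouk n q 2 1 = (12*real n*real n*(real q - 1)*(real q - 1) -36*real n*(real q - 1)*(real q - 1) -24*real n*(real q - 1) +24*(real q - 1)*(real q - 1) +24*(real q - 1))"
  unfolding K2 by (simp add: field_simps) algebra?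

lemma K2_2: "24 * krawtchouk n q 2 2 = (12*real n*real n*(real q - 1)*(real q - 1) -60*real n*(real q - 1)*(real q - 1) -48*real n*(real q - 1) +72*(real q - 1)*(real q - 1) +96*(real q - 1) +24)"
  unfolding K2 by (simp add: field_simps) algebra?

lemma K2_3: "24 * krawtchouk n q 2 3 = (12*real n*real n*(real q - 1)*(real q - 1) -84*real n*(real q - 1)*(real q - 1) -72*real n*(real q - 1) +144*(real q - 1)*(real q - 1) +216*(real q - 1) +72)"
  unfolding K2 by (simp add: field_simps) algebra?

lemma K2_4: "24 * krawtchouk n q 2 4 = (12*real n*real n*(real q - 1)*(real q - 1) -108*real n*(real q - 1)*(real q - 1) -96*real n*(real q - 1) +240*(real q - 1)*(real q - 1) +384*(real q - 1) +144)"
  unfolding K2 by (simp add: field_simps) algebra?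

lemma K3_0: "24 * krawtchouk n q 3 0 = (4*real n*real n*real n*(real q - 1)*(real q - 1)*(real q - 1) -12*real n*real n*(real q - 1)*(real q - 1)*(real q - 1) +8*real n*(real q - 1)*(real q - 1)*(real q - 1))"
  unfolding K3 by (simp add: field_simps) algebra?

lemma K3_1: "24 * krawtchouk n q 3 1 = (4*real n*real n*real n*(real q - 1)*(real q - 1)*(real q - 1) -24*real n*real n*(real q - 1)*(real q - 1)*(real q - 1) -12*real n*real n*(real q - 1)*(real q - 1) +44*real n*(real q - 1)*(real q - 1)*(real q - 1) +36*real n*(real q - 1)*(real q - 1) -24*(real q - 1)*(real q - 1)*(real q - 1) -24*(real q - 1)*(real q - 1))"
  unfolding K3 by (simp add: field_simps) algebra?

lemma K3_2: "24 * krawtchouk n q 3 2 = (4*real n*real n*real n*(real q - 1)*(real q - 1)*(real q - 1) -36*real n*real n*(real q - 1)*(real q - 1)*(real q - 1) -24*real n*real n*(real q - 1)*(real q - 1) +104*real n*(real q - 1)*(real q - 1)*(real q - 1) +120*real n*(real q - 1)*(real q - 1) +24*real n*(real q - 1) -96*(real q - 1)*(real q - 1)*(real q - 1) -144*(real q - 1)*(real q - 1) -48*(real q - 1))"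
  unfolding K3 by (simp add: field_simps) algebra?

lemma K3_3: "24 * krawtchouk n q 3 3 = (4*real n*real n*real n*(real q - 1)*(real q - 1)*(real q - 1) -48*real n*real n*(real q - 1)*(real q - 1)*(real q - 1) -36*real n*real n*(real q - 1)*(real q - 1) +188*real n*(real q - 1)*(real q - 1)*(real q - 1) +252*real n*(real q - 1)*(real q - 1) +72*real n*(real q - 1) -240*(real q - 1)*(real q - 1)*(real q - 1) -432*(real q - 1)*(real q - 1) -216*(real q - 1) -24)"
  unfolding K3 by (simp add: field_simps) algebra?

lemma K3_4: "24 * krawtchouk n q 3 4 = (4*real n*real n*real n*(real q - 1)*(real q - 1)*(real q - 1) -60*real n*real n*(real q - 1)*(real q - 1)*(real q - 1) -48*real n*real n*(real q - 1)*(real q - 1) +296*real n*(real q - 1)*(real q - 1)*(real q - 1) +432*real n*(real q - 1)*(real q - 1) +144*real n*(real q - 1) -480*(real q - 1)*(real q - 1)*(real q - 1) -960*(real q - 1)*(real q - 1) -576*(real q - 1) -96)"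
  unfolding K3 by (simp add: field_simps) algebra?

lemma K4_0: "24 * krawtchouk n q 4 0 = (real n*real n*real n*real n*(real q - 1)*(real q - 1)*(real q - 1)*(real q - 1) -6*real n*real n*real n*(real q - 1)*(real q - 1)*(real q - 1)*(real q - 1) +11*real n*real n*(real q - 1)*(real q - 1)*(real q - 1)*(real q - 1) -6*real n*(real q - 1)*(real q - 1)*(real q - 1)*(real q - 1))"
  unfolding K4 by (simp add: field_simps) algebra?

lemma K4_1: "24 * krawtchouk n q 4 1 = (real n*real n*real n*real n*(real q - 1)*(real q - 1)*(real q - 1)*(real q - 1) -10*real n*real n*real n*(real q - 1)*(real q - 1)*(real q - 1)*(real q - 1) -4*real n*real n*real n*(real q - 1)*(real q - 1)*(real q - 1) +35*real n*real n*(real q - 1)*(real q - 1)*(real q - 1)*(real q - 1) +24*real n*real n*(real q - 1)*(real q - 1)*(real q - 1) -50*real n*(real q - 1)*(real q - 1)*(real q - 1)*(real q - 1) -44*real n*(real q - 1)*(real q - 1)*(real q - 1) +24*(real q - 1)*(real q - 1)*(real q - 1)*(real q - 1) +24*(real q - 1)*(real q - 1)*(real q - 1))"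
  unfolding K4 by (simp add: field_simps) algebra?

lemma K4_2: "24 * krawtchouk n q 4 2 = (real n*real n*real n*real n*(real q - 1)*(real q - 1)*(real q - 1)*(real q - 1) -14*real n*real n*real n*(real q - 1)*(real q - 1)*(real q - 1)*(real q - 1) -8*real n*real n*real n*(real q - 1)*(real q - 1)*(real q - 1) +71*real n*real n*(real q - 1)*(real q - 1)*(real q - 1)*(real q - 1) +72*real n*real n*(real q - 1)*(real q - 1)*(real q - 1) +12*real n*real n*(real q - 1)*(real q - 1) -154*real n*(real q - 1)*(real q - 1)*(real q - 1)*(real q - 1) -208*real n*(real q - 1)*(real q - 1)*(real q - 1) -60*real n*(real q - 1)*(real q - 1) +120*(real q - 1)*(real q - 1)*(real q - 1)*(real q - 1) +192*(real q - 1)*(real q - 1)*(real q - 1) +72*(real q - 1)*(real q - 1))"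
  unfolding K4 by (simp add: field_simps) algebra?

lemma K4_3: "24 * krawtchouk n q 4 3 = (real n*real n*real n*real n*(real q - 1)*(real q - 1)*(real q - 1)*(real q - 1) -18*real n*real n*real n*(real q - 1)*(real q - 1)*(real q - 1)*(real q - 1) -12*real n*real n*real n*(real q - 1)*(real q - 1)*(real q - 1) +119*real n*real n*(real q - 1)*(real q - 1)*(real q - 1)*(real q - 1) +144*real n*real n*(real q - 1)*(real q - 1)*(real q - 1) +36*real n*real n*(real q - 1)*(real q - 1) -342*real n*(real q - 1)*(real q - 1)*(real q - 1)*(real q - 1) -564*real n*(real q - 1)*(real q - 1)*(real q - 1) -252*real n*(real q - 1)*(real q - 1) -24*real n*(real q - 1) +360*(real q - 1)*(real q - 1)*(real q - 1)*(real q - 1) +720*(real q - 1)*(real q - 1)*(real q - 1) +432*(real q - 1)*(real q - 1) +72*(real q - 1))"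
  unfolding K4 by (simp add: field_simps) algebra?

lemma K4_4: "24 * krawtchouk n q 4 4 = (real n*real n*real n*real n*(real q - 1)*(real q - 1)*(real q - 1)*(real q - 1) -22*real n*real n*real n*(real q - 1)*(real q - 1)*(real q - 1)*(real q - 1) -16*real n*real n*real n*(real q - 1)*(real q - 1)*(real q - 1) +179*real n*real n*(real q - 1)*(real q - 1)*(real q - 1)*(real q - 1) +240*real n*real n*(real q - 1)*(real q - 1)*(real q - 1) +72*real n*real n*(real q - 1)*(real q - 1) -638*real n*(real q - 1)*(real q - 1)*(real q - 1)*(real q - 1) -1184*real n*(real q - 1)*(real q - 1)*(real q - 1) -648*real n*(real q - 1)*(real q - 1) -96*real n*(real q - 1) +840*(real q - 1)*(real q - 1)*(real q - 1)*(real q - 1) +1920*(real q - 1)*(real q - 1)*(real q - 1) +1440*(real q - 1)*(real q - 1) +384*(real q - 1) +24)"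
  unfolding K4 by (simp add: field_simps) algebra?

lemma W_0: "Wt n q 0 = (real n*real n*real n*real n*(real q - 1)*(real q - 1)*(real q - 1)*(real q - 1) -10*real n*real n*real n*(real q - 1)*(real q - 1)*(real q - 1)*(real q - 1) -4*real n*real n*real n*(real q - 1)*(real q - 1)*(real q - 1) +35*real n*real n*(real q - 1)*(real q - 1)*(real q - 1)*(real q - 1) +36*real n*real n*(real q - 1)*(real q - 1)*(real q - 1) +12*real n*real n*(real q - 1)*(real q - 1) -50*real n*(real q - 1)*(real q - 1)*(real q - 1)*(real q - 1) -104*real n*(real q - 1)*(real q - 1)*(real q - 1) -84*real n*(real q - 1)*(real q - 1) -24*real n*(real q - 1) +24*(real q - 1)*(real q - 1)*(real q - 1)*(real q - 1) +96*(real q - 1)*(real q - 1)*(real q - 1) +144*(real q - 1)*(real q - 1) +96*(real q - 1) +24)"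
  unfolding Wt_def Let_def by simp algebra?

lemma W_1: "Wt n q 1 = (-4*real n*real n*real n*real n*(real q - 1)*(real q - 1)*(real q - 1)*(real q - 1) +36*real n*real n*real n*(real q - 1)*(real q - 1)*(real q - 1)*(real q - 1) +12*real n*real n*real n*(real q - 1)*(real q - 1)*(real q - 1) -104*real n*real n*(real q - 1)*(real q - 1)*(real q - 1)*(real q - 1) -84*real n*real n*(real q - 1)*(real q - 1)*(real q - 1) -24*real n*real n*(real q - 1)*(real q - 1) +96*real n*(real q - 1)*(real q - 1)*(real q - 1)*(real q - 1) +144*real n*(real q - 1)*(real q - 1)*(real q - 1) +96*real n*(real q - 1)*(real q - 1) +24*real n*(real q - 1))"
  unfolding Wt_def Let_def by simp algebra?

lemma W_2: "Wt n q 2 = (6*real n*real n*real n*real n*(real q - 1)*(real q - 1)*(real q - 1)*(real q - 1) -48*real n*real n*real n*(real q - 1)*(real q - 1)*(real q - 1)*(real q - 1) -12*real n*real n*real n*(real q - 1)*(real q - 1)*(real q - 1) +114*real n*real n*(real q - 1)*(real q - 1)*(real q - 1)*(real q - 1) +60*real n*real n*(real q - 1)*(real q - 1)*(real q - 1) +12*real n*real n*(real q - 1)*(real q - 1) -72*real n*(real q - 1)*(real q - 1)*(real q - 1)*(real q - 1) -48*real n*(real q - 1)*(real q - 1)*(real q - 1) -12*real n*(real q - 1)*(real q - 1))"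
  unfolding Wt_def Let_def by simp algebra?

lemma W_3: "Wt n q 3 = (-4*real n*real n*real n*real n*(real q - 1)*(real q - 1)*(real q - 1)*(real q - 1) +28*real n*real n*real n*(real q - 1)*(real q - 1)*(real q - 1)*(real q - 1) +4*real n*real n*real n*(real q - 1)*(real q - 1)*(real q - 1) -56*real n*real n*(real q - 1)*(real q - 1)*(real q - 1)*(real q - 1) -12*real n*real n*(real q - 1)*(real q - 1)*(real q - 1) +32*real n*(real q - 1)*(real q - 1)*(real q - 1)*(real q - 1) +8*real n*(real q - 1)*(real q - 1)*(real q - 1))"
  unfolding Wt_def Let_def by simp algebra?

lemma W_4: "Wt n q 4 = (real n*real n*real n*real n*(real q - 1)*(real q - 1)*(real q - 1)*(real q - 1) -6*real n*real n*real n*(real q - 1)*(real q - 1)*(real q - 1)*(real q - 1) +11*real n*real n*(real q - 1)*(real q - 1)*(real q - 1)*(real q - 1) -6*real n*(real q - 1)*(real q - 1)*(real q - 1)*(real q - 1))"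
  unfolding Wt_def Let_def by simp algebra?

lemma absq0: fixes N a :: real shows "(N*N*N*N*a*a*a*a -10*N*N*N*a*a*a*a -4*N*N*N*a*a*a +35*N*N*a*a*a*a +36*N*N*a*a*a +12*N*N*a*a -50*N*a*a*a*a -104*N*a*a*a -84*N*a*a -24*N*a +24*a*a*a*a +96*a*a*a +144*a*a +96*a +24) * (24) + (-4*N*N*N*N*a*a*a*a +36*N*N*N*a*a*a*a +12*N*N*N*a*a*a -104*N*N*a*a*a*a -84*N*N*a*a*a -24*N*N*a*a +96*N*a*a*a*a +144*N*a*a*a +96*N*a*a +24*N*a) * (24) + (6*N*N*N*N*a*a*a*a -48*N*N*N*a*a*a*a -12*N*N*N*a*a*a +114*N*N*a*a*a*a +60*N*N*a*a*a +12*N*N*a*a -72*N*a*a*a*a -48*N*a*a*a -12*N*a*a) * (24) + (-4*N*N*N*N*a*a*a*a +28*N*N*N*a*a*a*a +4*N*N*N*a*a*a -56*N*N*a*a*a*a -12*N*N*a*a*a +32*N*a*a*a*a +8*N*a*a*a) * (24) + (N*N*N*N*a*a*a*a -6*N*N*N*a*a*a*a +11*N*N*a*a*a*a -6*N*a*a*a*a) * (24) = 24*24*(a+1)^4" by algebra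

lemma absq1: fixes N a :: real shows "(N*N*N*N*a*a*a*a -10*N*N*N*a*a*a*a -4*N*N*N*a*a*a +35*N*N*a*a*a*a +36*N*N*a*a*a +12*N*N*a*a -50*N*a*a*a*a -104*N*a*a*a -84*N*a*a -24*N*a +24*a*a*a*a +96*a*a*a +144*a*a +96*a +24) * (24*N*a) + (-4*N*N*N*N*a*a*a*a +36*N*N*N*a*a*a*a +12*N*N*N*a*a*a -104*N*N*a*a*a*a -84*N*N*a*a*a -24*N*N*a*a +96*N*a*a*a*a +144*N*a*a*a +96*N*a*a +24*N*a) * (24*N*a -24*a -24) + (6*N*N*N*N*a*a*a*a -48*N*N*N*a*a*a*a -12*N*N*N*a*a*a +114*N*N*a*a*a*a +60*N*N*a*a*a +12*N*N*a*a -72*N*a*a*a*a -48*N*a*a*a -12*N*a*a) * (24*N*a -48*a -48) + (-4*N*N*N*N*a*a*a*a +28*N*N*N*a*a*a*a +4*N*N*N*a*a*a -56*N*N*a*a*a*a -12*N*N*a*a*a +32*N*a*a*a*a +8*N*a*a*a) * (24*N*a -72*a -72) + (N*N*N*N*a*a*a*a -6*N*N*N*a*a*a*a +11*N*N*a*a*a*a -6*N*a*a*a*a) * (24*N*a -96*a -96) = 0" by algebra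

lemma absq2: fixes N a :: real shows "(N*N*N*N*a*a*a*a -10*N*N*N*a*a*a*a -4*N*N*N*a*a*a +35*N*N*a*a*a*a +36*N*N*a*a*a +12*N*N*a*a -50*N*a*a*a*a -104*N*a*a*a -84*N*a*a -24*N*a +24*a*a*a*a +96*a*a*a +144*a*a +96*a +24) * (12*N*N*a*a -12*N*a*a) + (-4*N*N*N*N*a*a*a*a +36*N*N*N*a*a*a*a +12*N*N*N*a*a*a -104*N*N*a*a*a*a -84*N*N*a*a*a -24*N*N*a*a +96*N*a*a*a*a +144*N*a*a*a +96*N*a*a +24*N*a) * (12*N*N*a*a -36*N*a*a -24*N*a +24*a*a +24*a) + (6*N*N*N*N*a*a*a*a -48*N*N*N*a*a*a*a -12*N*N*N*a*a*a +114*N*N*a*a*a*a +60*N*N*a*a*a +12*N*N*a*a -72*N*a*a*a*a -48*N*a*a*a -12*N*a*a) * (12*N*N*a*a -60*N*a*a -48*N*a +72*a*a +96*a +24) + (-4*N*N*N*N*a*a*a*a +28*N*N*N*a*a*a*a +4*N*N*N*a*a*a -56*N*N*a*a*a*a -12*N*N*a*a*a +32*N*a*a*a*a +8*N*a*a*a) * (12*N*N*a*a -84*N*a*a -72*N*a +144*a*a +216*a +72) + (N*N*N*N*a*a*a*a -6*N*N*N*a*a*a*a +11*N*N*a*a*a*a -6*N*a*a*a*a) * (12*N*N*a*a -108*N*a*a -96*N*a +240*a*a +384*a +144) = 0" by algebra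

lemma absq3: fixes N a :: real shows "(N*N*N*N*a*a*a*a -10*N*N*N*a*a*a*a -4*N*N*N*a*a*a +35*N*N*a*a*a*a +36*N*N*a*a*a +12*N*N*a*a -50*N*a*a*a*a -104*N*a*a*a -84*N*a*a -24*N*a +24*a*a*a*a +96*a*a*a +144*a*a +96*a +24) * (4*N*N*N*a*a*a -12*N*N*a*a*a +8*N*a*a*a) + (-4*N*N*N*N*a*a*a*a +36*N*N*N*a*a*a*a +12*N*N*N*a*a*a -104*N*N*a*a*a*a -84*N*N*a*a*a -24*N*N*a*a +96*N*a*a*a*a +144*N*a*a*a +96*N*a*a +24*N*a) * (4*N*N*N*a*a*a -24*N*N*a*a*a -12*N*N*a*a +44*N*a*a*a +36*N*a*a -24*a*a*a -24*a*a) + (6*N*N*N*N*a*a*a*a -48*N*N*N*a*a*a*a -12*N*N*N*a*a*a +114*N*N*a*a*a*a +60*N*N*a*a*a +12*N*N*a*a -72*N*a*a*a*a -48*N*a*a*a -12*N*a*a) * (4*N*N*N*a*a*a -36*N*N*a*a*a -24*N*N*a*a +104*N*a*a*a +120*N*a*a +24*N*a -96*a*a*a -144*a*a -48*a) + (-4*N*N*N*N*a*a*a*a +28*N*N*N*a*a*a*a +4*N*N*N*a*a*a -56*N*N*a*a*a*a -12*N*N*a*a*a +32*N*a*a*a*a +8*N*a*a*a) * (4*N*N*N*a*a*a -48*N*N*a*a*a -36*N*N*a*a +188*N*a*a*a +252*N*a*a +72*N*a -240*a*a*a -432*a*a -216*a -24) + (N*N*N*N*a*a*a*a -6*N*N*N*a*a*a*a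 +11*N*N*a*a*a*a -6*N*a*a*a*a) * (4*N*N*N*a*a*a -60*N*N*a*a*a -48*N*N*a*a +296*N*a*a*a +432*N*a*a +144*N*a -480*a*a*a -960*a*a -576*a -96) = 0" by algebra

lemma absq4: fixes N a :: real shows "(N*N*N*N*a*a*a*a -10*N*N*N*a*a*a*a -4*N*N*N*a*a*a +35*N*N*a*a*a*a +36*N*N*a*a*a +12*N*N*a*a -50*N*a*a*a*a -104*N*a*a*a -84*N*a*a -24*N*a +24*a*a*a*a +96*a*a*a +144*a*a +96*a +24) * (N*N*N*N*a*a*a*a -6*N*N*N*a*a*a*a +11*N*N*a*a*a*a -6*N*a*a*a*a) + (-4*N*N*N*N*a*a*a*a +36*N*N*N*a*a*a*a +12*N*N*N*a*a*a -104*N*N*a*a*a*a -84*N*N*a*a*a -24*N*N*a*a +96*N*a*a*a*a +144*N*a*a*a +96*N*a*a +24*N*a) * (N*N*N*N*a*a*a*a -10*N*N*N*a*a*a*a -4*N*N*N*a*a*a +35*N*N*a*a*a*a +24*N*N*a*a*a -50*N*a*a*a*a -44*N*a*a*a +24*a*a*a*a +24*a*a*a) + (6*N*N*N*N*a*a*a*a -48*N*N*N*a*a*a*a -12*N*N*N*a*a*a +114*N*N*a*a*a*a +60*N*N*a*a*a +12*N*N*a*a -72*N*a*a*a*a -48*N*a*a*a -12*N*a*a) * (N*N*N*N*a*a*a*a -14*N*N*N*a*a*a*a -8*N*N*N*a*a*a +71*N*N*a*a*a*a +72*N*N*a*a*a +12*N*N*a*a -154*N*a*a*a*a -208*N*a*a*a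 -60*N*a*a +120*a*a*a*a +192*a*a*a +72*a*a) + (-4*N*N*N*N*a*a*a*a +28*N*N*N*a*a*a*a +4*N*N*N*a*a*a -56*N*N*a*a*a*a -12*N*N*a*a*a +32*N*a*a*a*a +8*N*a*a*a) * (N*N*N*N*a*a*a*a -18*N*N*N*a*a*a*a -12*N*N*N*a*a*a +119*N*N*a*a*a*a +144*N*N*a*a*a +36*N*N*a*a -342*N*a*a*a*a -564*N*a*a*a -252*N*a*a -24*N*a +360*a*a*a*a +720*a*a*a +432*a*a +72*a) + (N*N*N*N*a*a*a*a -6*N*N*N*a*a*a*a +11*N*N*a*a*a*a -6*N*a*a*a*a) * (N*N*N*N*a*a*a*a -22*N*N*N*a*a*a*a -16*N*N*N*a*a*a +179*N*N*a*a*a*a +240*N*N*a*a*a +72*N*N*a*a -638*N*a*a*a*a -1184*N*a*a*a -648*N*a*a -96*N*a +840*a*a*a*a +1920*a*a*a +1440*a*a +384*a +24) = 0" by algebra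

lemma sum5: "(\<Sum>k<(5::nat). f k) = f 0 + f 1 + f 2 + f 3 + (f 4 :: real)"
  by (simp add: numeral_eq_Suc)

lemma quadS1: "(\<Sum>k<5. Wt n q k * krawtchouk n q 1 (real k)) = 0"
proof -
  have "24 * (Wt n q 0 * krawtchouk n q 1 0 + Wt n q 1 * krawtchouk n q 1 1 + Wt n q 2 * krawtchouk n q 1 2 + Wt n q 3 * krawtchouk n q 1 3 + Wt n q 4 * krawtchouk n q 1 4) = Wt n q 0 * (24 * krawtchouk n q 1 0) + Wt n q 1 * (24 * krawtchouk n q 1 1) + Wt n q 2 * (24 * krawtchouk n q 1 2) + Wt n q 3 * (24 * krawtchouk n q 1 3) + Wt n q 4 * (24 * krawtchouk n q 1 4)" by (simp add: algebra_simps)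
  also have "\<dots> = 0" unfolding K1_0 K1_1 K1_2 K1_3 K1_4 W_0 W_1 W_2 W_3 W_4
    by (rule absq1[of "real n" "real q - 1"])
  finally show ?thesis by (simp add: sum5)
qed

lemma quadS2: "(\<Sum>k<5. Wt n q k * krawtchouk n q 2 (real k)) = 0"
proof -
  have "24 * (Wt n q 0 * krawtchouk n q 2 0 + Wt n q 1 * krawtchouk n q 2 1 + Wt n q 2 * krawtchouk n q 2 2 + Wt n q 3 * krawtchouk n q 2 3 + Wt n q 4 * krawtchouk n q 2 4) = Wt n q 0 * (24 * krawtchouk n q 2 0) + Wt n q 1 * (24 * krawtchouk n q 2 1) + Wt n q 2 * (24 * krawtchouk n q 2 2) + Wt n q 3 * (24 * krawtchouk n q 2 3) + Wt n q 4 * (24 * krawtchouk n q 2 4)" by (simp add: algebra_simps)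
  also have "\<dots> = 0" unfolding K2_0 K2_1 K2_2 K2_3 K2_4 W_0 W_1 W_2 W_3 W_4
    by (rule absq2[of "real n" "real q - 1"])
  finally show ?thesis by (simp add: sum5)
qed

lemma quadS3: "(\<Sum>k<5. Wt n q k * krawtchouk n q 3 (real k)) = 0"
proof -
  have "24 * (Wt n q 0 * krawtchouk n q 3 0 + Wt n q 1 * krawtchouk n q 3 1 + Wt n q 2 * krawtchouk n q 3 2 + Wt n q 3 * krawtchouk n q 3 3 + Wt n q 4 * krawtchouk n q 3 4) = Wt n q 0 * (24 * krawtchouk n q 3 0) + Wt n q 1 * (24 * krawtchouk n q 3 1) + Wt n q 2 * (24 * krawtchouk n q 3 2) + Wt n q 3 * (24 * krawtchouk n q 3 3) + Wt n q 4 * (24 * krawtchouk n q 3 4)" by (simp add: algebra_simps)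
  also have "\<dots> = 0" unfolding K3_0 K3_1 K3_2 K3_3 K3_4 W_0 W_1 W_2 W_3 W_4
    by (rule absq3[of "real n" "real q - 1"])
  finally show ?thesis by (simp add: sum5)
qed

lemma quadS4: "(\<Sum>k<5. Wt n q k * krawtchouk n q 4 (real k)) = 0"
proof -
  have "24 * (Wt n q 0 * krawtchouk n q 4 0 + Wt n q 1 * krawtchouk n q 4 1 + Wt n q 2 * krawtchouk n q 4 2 + Wt n q 3 * krawtchouk n q 4 3 + Wt n q 4 * krawtchouk n q 4 4) = Wt n q 0 * (24 * krawtchouk n q 4 0) + Wt n q 1 * (24 * krawtchouk n q 4 1) + Wt n q 2 * (24 * krawtchouk n q 4 2) + Wt n q 3 * (24 * krawtchouk n q 4 3) + Wt n q 4 * (24 * krawtchouk n q 4 4)" by (simp add: algebra_simps)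
  also have "\<dots> = 0" unfolding K4_0 K4_1 K4_2 K4_3 K4_4 W_0 W_1 W_2 W_3 W_4
    by (rule absq4[of "real n" "real q - 1"])
  finally show ?thesis by (simp add: sum5)
qed

lemma quadS0: "(\<Sum>k<5. Wt n q k * krawtchouk n q 0 (real k)) = 24 * real q ^ 4"
proof -
  have "24 * (Wt n q 0 + Wt n q 1 + Wt n q 2 + Wt n q 3 + Wt n q 4) = (real n*real n*real n*real n*(real q - 1)*(real q - 1)*(real q - 1)*(real q - 1) -10*real n*real n*real n*(real q - 1)*(real q - 1)*(real q - 1)*(real q - 1) -4*real n*real n*real n*(real q - 1)*(real q - 1)*(real q - 1) +35*real n*real n*(real q - 1)*(real q - 1)*(real q - 1)*(real q - 1) +36*real n*real n*(real q - 1)*(real q - 1)*(real q - 1) +12*real n*real n*(real q - 1)*(real q - 1) -50*real n*(real q - 1)*(real q - 1)*(real q - 1)*(real q - 1) -104*real n*(real q - 1)*(real q - 1)*(real q - 1) -84*real n*(real q - 1)*(real q - 1) -24*real n*(real q - 1) +24*(real q - 1)*(real q - 1)*(real q - 1)*(real q - 1) +96*(real q - 1)*(real q - 1)*(real q - 1) +144*(real q - 1)*(real q - 1) +96*(real q - 1) +24) * 24 + (-4*real n*real n*real n*real n*(real q - 1)*(real q - 1)*(real q - 1)*(real q - 1) +36*real n*real n*real n*(real q - 1)*(real q - 1)*(real q - 1)*(real q - 1) +12*real n*real n*real n*(real q - 1)*(real q - 1)*(real q - 1) -104*real n*real n*(real q - 1)*(real q - 1)*(real q - 1)*(real q - 1)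 -84*real n*real n*(real q - 1)*(real q - 1)*(real q - 1) -24*real n*real n*(real q - 1)*(real q - 1) +96*real n*(real q - 1)*(real q - 1)*(real q - 1)*(real q - 1) +144*real n*(real q - 1)*(real q - 1)*(real q - 1) +96*real n*(real q - 1)*(real q - 1) +24*real n*(real q - 1)) * 24 + (6*real n*real n*real n*real n*(real q - 1)*(real q - 1)*(real q - 1)*(real q - 1) -48*real n*real n*real n*(real q - 1)*(real q - 1)*(real q - 1)*(real q - 1) -12*real n*real n*real n*(real q - 1)*(real q - 1)*(real q - 1) +114*real n*real n*(real q - 1)*(real q - 1)*(real q - 1)*(real q - 1) +60*real n*real n*(real q - 1)*(real q - 1)*(real q - 1) +12*real n*real n*(real q - 1)*(real q - 1) -72*real n*(real q - 1)*(real q - 1)*(real q - 1)*(real q - 1) -48*real n*(real q - 1)*(real q - 1)*(real q - 1) -12*real n*(real q - 1)*(real q - 1)) * 24 + (-4*real n*real n*real n*real n*(real q - 1)*(real q - 1)*(real q - 1)*(real q - 1) +28*real n*real n*real n*(real q - 1)*(real q - 1)*(real q - 1)*(real q - 1) +4*real n*real n*real n*(real q - 1)*(real q - 1)*(real q - 1) -56*real n*real n*(real q - 1)*(real q - 1)*(real q - 1)*(real q - 1) -12*real n*real n*(real q - 1)*(real q - 1)*(real q - 1) +32*real n*(real q - 1)*(real q - 1)*(real q - 1)*(real q - 1) +8*real n*(real q - 1)*(real q - 1)*(real q - 1)) * 24 + (real n*real n*real n*real n*(real q - 1)*(real q - 1)*(real q - 1)*(real q - 1) -6*real n*real n*real n*(real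 q - 1)*(real q - 1)*(real q - 1)*(real q - 1) +11*real n*real n*(real q - 1)*(real q - 1)*(real q - 1)*(real q - 1) -6*real n*(real q - 1)*(real q - 1)*(real q - 1)*(real q - 1)) * 24"
    unfolding W_0 W_1 W_2 W_3 W_4 by (simp add: algebra_simps)
  also have "\<dots> = 24*24*(real q - 1 + 1)^4" by (rule absq0[of "real n" "real q - 1"])
  finally show ?thesis by (simp add: sum5 K0)
qed





lemma fpoly_at:
  assumes n: "n > 0" and s: "s = 1 - 2 * of_int d / real n"
  shows "fpoly n b s (1 - 2 * real k / real n)
     = 16 * (real n - real k) * (of_int b - real k) * (of_int b - 1 - real k) * (of_int d - real k) / real n ^ 4"
  using n unfolding s fpoly_def by (simp add: field_simps) algebra
lemma fid:
  fixes N Q B D :: real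
  shows "(24*Q^4 - 24*N*(Q-1)*Q^3 + 12*(N*(N-1))*(Q-1)^2*Q^2 - 4*(N*(N-1)*(N-2))*(Q-1)^3*Q + (N*(N-1)*(N-2)*(N-3))*(Q-1)^4) * (N - 0) * (B - 0) * (B - 1 - 0) * (D - 0)
  + (24*N*(Q-1)*Q^3 - 24*(N*(N-1))*(Q-1)^2*Q^2 + 12*(N*(N-1)*(N-2))*(Q-1)^3*Q - 4*(N*(N-1)*(N-2)*(N-3))*(Q-1)^4) * (N - 1) * (B - 1) * (B - 1 - 1) * (D - 1)
  + (12*(N*(N-1))*(Q-1)^2*Q^2 - 12*(N*(N-1)*(N-2))*(Q-1)^3*Q + 6*(N*(N-1)*(N-2)*(N-3))*(Q-1)^4) * (N - 2) * (B - 2) * (B - 1 - 2) * (D - 2)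
  + (4*(N*(N-1)*(N-2))*(Q-1)^3*Q - 4*(N*(N-1)*(N-2)*(N-3))*(Q-1)^4) * (N - 3) * (B - 3) * (B - 1 - 3) * (D - 3)
  + ((N*(N-1)*(N-2)*(N-3))*(Q-1)^4) * (N - 4) * (B - 4) * (B - 1 - 4) * (D - 4)
  = 24 * N * ((1 - (Q*(N-1-D) - (N-2))) * Q^2 * B^2
     + ((Q*(N-1-D) - (N-2)) * (Q - 1) * (2 * N - 1) + (Q*(N-1-D) - (N-2)) - Q) * Q * B
     - (Q - 1) * (N - 1) * ((Q - 1) * ((Q*(N-1-D) - (N-2)) + 1) * N + 2 * ((Q*(N-1-D) - (N-2)) - Q + 1)))"
  by algebra
lemma den_pos:
  fixes N Q j B :: real
  assumes Q: "Q \<ge> 2" and N: "N \<ge> 3" and j: "j \<ge> 1"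
    and G: "(Q - 1) * (N - 2) + Q * j - j^2 > 0"
    and b1: "N - 1 - (j - Q + 1) * (N - 2) / (Q * j) < B"
    and b2: "B \<le> N - 1 - (j - Q + 1) * (N - 2) / (Q * j) + 1"
  shows "(1 - j) * Q^2 * B^2 + (j * (Q - 1) * (2 * N - 1) + j - Q) * Q * B
     - (Q - 1) * (N - 1) * ((Q - 1) * (j + 1) * N + 2 * (j - Q + 1)) > 0"
proof -
  define d0 where "d0 = N - 1 - (j - Q + 1) * (N - 2) / (Q * j)"
  define \<mu> where "\<mu> = B - d0"
  define G where "G = (Q - 1) * (N - 2) + Q * j - j^2"
  have mu: "0 < \<mu>" "\<mu> \<le> 1" using b1 b2 unfolding \<mu>_def d0_def by auto
  have Bd: "B = N - 1 - (j - Q + 1) * (N - 2) / (Q * j) + \<mu>" unfolding \<mu>_def d0_def by simp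
  have Qj: "Q * j \<noteq> 0" using Q j by auto
  have e: "j^2 * ((1 - j) * Q^2 * B^2 + (j * (Q - 1) * (2 * N - 1) + j - Q) * Q * B
     - (Q - 1) * (N - 1) * ((Q - 1) * (j + 1) * N + 2 * (j - Q + 1)))
     = (Q - 1) * (j + 1) * (N - 2) * G + \<mu> * (2 * Q * j * G) + j^2 * ((j - 1) * Q^2) * (\<mu> - \<mu>^2)"
    unfolding Bd G_def using Qj by (simp add: field_simps) algebra
  have p1: "(Q - 1) * (j + 1) * (N - 2) * G > 0" using Q N j G unfolding G_def by simp
  have p2: "\<mu> * (2 * Q * j * G) \<ge> 0" using mu Q j G unfolding G_def by simp
  have p3: "j^2 * ((j - 1) * Q^2) * (\<mu> - \<mu>^2) \<ge> 0"
  proof -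
    have "\<mu> - \<mu>^2 \<ge> 0" using mu by (simp add: power2_eq_square mult_le_cancel_left1)
    then show ?thesis using j by simp
  qed
  have "j^2 * ((1 - j) * Q^2 * B^2 + (j * (Q - 1) * (2 * N - 1) + j - Q) * Q * B
     - (Q - 1) * (N - 1) * ((Q - 1) * (j + 1) * N + 2 * (j - Q + 1))) > 0"
    unfolding e using p1 p2 p3 by linarith
  then show ?thesis using j by (simp add: zero_less_mult_iff)
qed

lemma sum_atMost4: "(\<Sum>i\<le>(4::nat). f i) = f 0 + f 1 + f 2 + f 3 + (f 4 :: real)"
  by (simp add: numeral_eq_Suc)

lemma fc0_eq:
  assumes n: "n > 0" and hexp: "\<forall>t. fpoly n b s t = (\<Sum>i\<le>4. fc i * Qpoly n q i t)"
  shows "24 * real q ^ 4 * fc 0 = (\<Sum>k<5. Wt n q k * fpoly n b s (1 - 2 * real k / real n))"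
proof -
  have z: "real n * (1 - (1 - 2 * real k / real n)) / 2 = real k" for k
    using n by (simp add: field_simps)
  have Q: "Qpoly n q i (1 - 2 * real k / real n) = krawtchouk n q i (real k) / r_coef n q i" for i k
    unfolding Qpoly_def z ..
  have f: "fpoly n b s (1 - 2 * real k / real n) = (\<Sum>i\<le>4. fc i * (krawtchouk n q i (real k) / r_coef n q i))" for k
    unfolding hexp[rule_format] Q ..
  have "(\<Sum>k<5. Wt n q k * fpoly n b s (1 - 2 * real k / real n))
      = (\<Sum>k<5. \<Sum>i\<le>4. fc i / r_coef n q i * (Wt n q k * krawtchouk n q i (real k)))"
    unfolding f sum_distrib_left by (intro sum.cong refl) (simp add: field_simps)
  also have "\<dots> = (\<Sum>i\<le>4. \<Sum>k<5. fc i / r_coef n q i * (Wt n q k * krawtchouk n q i (real k)))"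
    by (rule sum.swap)
  also have "\<dots> = (\<Sum>i\<le>4. fc i / r_coef n q i * (\<Sum>k<5. Wt n q k * krawtchouk n q i (real k)))"
    by (simp only: sum_distrib_left)
  also have "\<dots> = 24 * real q ^ 4 * fc 0"
    unfolding sum_atMost4 quadS0 quadS1 quadS2 quadS3 quadS4 by (simp add: r_coef_def)
  finally show ?thesis ..
qed

lemma f_nonpos:
  fixes b d :: int and k n :: nat
  assumes "k \<le> n" "of_int d \<le> real k"
  shows "(real n - real k) * (of_int b - real k) * (of_int b - 1 - real k) * (of_int d - real k) \<le> 0"
proof -
  have "(b - int k) * (b - 1 - int k) \<ge> 0"
    by (cases "b - int k \<ge> 1") (auto intro: mult_nonneg_nonneg mult_nonpos_nonpos)
  then have h: "(of_int b - real k) * (of_int b - 1 - real k) \<ge> 0"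
  proof -
    have "0 \<le> real_of_int ((b - int k) * (b - 1 - int k))" using \<open>(b - int k) * (b - 1 - int k) \<ge> 0\<close> by (simp only: of_int_0_le_iff)
    then show ?thesis by simp
  qed
  have "(real n - real k) * ((of_int b - real k) * (of_int b - 1 - real k)) * (of_int d - real k) \<le> 0"
    using assms by (intro mult_nonneg_nonpos[OF mult_nonneg_nonneg[OF _ h]]) auto
  then show ?thesis by (simp add: mult_ac)
qed



lemma lp_bound:
  assumes n: "n > 0" and q: "q \<ge> 1" and s: "s = 1 - 2 * of_int d / real n"
    and hexp: "\<forall>t. fpoly n b s t = (\<Sum>i\<le>4. fc i * Qpoly n q i t)"
    and hpos: "\<forall>i\<in>{1..4}. fc i \<ge> 0"
    and C: "is_code q n s C"
  shows "fc 0 * real (card C) ^ 2 \<le> real (card C) * fpoly n b s 1"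
proof -
  have CH: "C \<subseteq> hamming_space q n" using C by (simp add: is_code_def)
  have fC: "finite C" using CH hs_finite finite_subset by blast
  define t where "t x y = 1 - 2 * real (hamming_dist x y) / real n" for x y
  have z: "real n * (1 - t x y) / 2 = real (hamming_dist x y)" for x y
    using n unfolding t_def by (simp add: field_simps)
  have Qt: "Qpoly n q i (t x y) = krawtchouk n q i (real (hamming_dist x y)) / r_coef n q i" for i x y
    unfolding Qpoly_def z ..
  define g where "g i x y = fc i * (krawtchouk n q i (real (hamming_dist x y)) / r_coef n q i)" for i x y
  have f: "fpoly n b s (t x y) = (\<Sum>i\<le>4. g i x y)" for x y
    unfolding hexp[rule_format] Qt g_def ..
  have "(\<Sum>x\<in>C. \<Sum>y\<in>C. fpoly n b s (t x y)) = (\<Sum>x\<in>C. \<Sum>i\<le>4. \<Sum>y\<in>C. g i x y)"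
    unfolding f by (rule sum.cong[OF refl], rule sum.swap)
  also have "\<dots> = (\<Sum>i\<le>4. \<Sum>x\<in>C. \<Sum>y\<in>C. g i x y)" by (rule sum.swap)
  finally have S: "(\<Sum>x\<in>C. \<Sum>y\<in>C. fpoly n b s (t x y)) = (\<Sum>i\<le>4. \<Sum>x\<in>C. \<Sum>y\<in>C. g i x y)" .
  have gi: "(\<Sum>x\<in>C. \<Sum>y\<in>C. g i x y) = fc i * ((\<Sum>x\<in>C. \<Sum>y\<in>C. krawtchouk n q i (real (hamming_dist x y))) / r_coef n q i)" for i
    unfolding g_def by (simp add: sum_distrib_left sum_divide_distrib)
  have nn: "0 \<le> (\<Sum>x\<in>C. \<Sum>y\<in>C. g i x y)" if "i \<in> {1..4}" for i
    unfolding gi using hpos that delsarte[OF q CH, of i] q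
    by (intro mult_nonneg_nonneg divide_nonneg_nonneg) (auto simp: r_coef_def)
  have i0: "(\<Sum>x\<in>C. \<Sum>y\<in>C. g 0 x y) = fc 0 * real (card C) ^ 2"
    unfolding gi by (simp add: K0 r_coef_def power2_eq_square)
  have lower: "fc 0 * real (card C) ^ 2 \<le> (\<Sum>x\<in>C. \<Sum>y\<in>C. fpoly n b s (t x y))"
    unfolding S sum_atMost4 i0 using nn[of 1] nn[of 2] nn[of 3] nn[of 4] by simp
  have off: "fpoly n b s (t x y) \<le> 0" if xy: "x \<in> C" "y \<in> C" "x \<noteq> y" for x y
  proof -
    have le: "hamming_dist x y \<le> n" using xy CH hd_le[of x y] by (auto simp: hamming_space_def)
    have "1 - 2 * real (hamming_dist x y) / real n \<le> s" using C xy by (auto simp: is_code_def)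
    then have "of_int d \<le> real (hamming_dist x y)" using n unfolding s by (simp add: field_simps)
    then have P: "(real n - real (hamming_dist x y)) * (of_int b - real (hamming_dist x y)) * (of_int b - 1 - real (hamming_dist x y)) * (of_int d - real (hamming_dist x y)) \<le> 0"
      by (rule f_nonpos[OF le])
    have "16 * (real n - real (hamming_dist x y)) * (of_int b - real (hamming_dist x y)) * (of_int b - 1 - real (hamming_dist x y)) * (of_int d - real (hamming_dist x y)) / real n ^ 4
       = (16 * ((real n - real (hamming_dist x y)) * (of_int b - real (hamming_dist x y)) * (of_int b - 1 - real (hamming_dist x y)) * (of_int d - real (hamming_dist x y)))) / real n ^ 4"
      by (simp only: mult.assoc)
    also have "\<dots> \<le> 0" by (rule divide_nonpos_pos[OF mult_nonneg_nonpos[OF _ P]]) (use n in auto)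
    finally show ?thesis unfolding t_def fpoly_at[OF n s] .
  qed
  have diag: "t x x = 1" for x by (simp add: t_def hamming_dist_def)
  have row: "(\<Sum>y\<in>C. fpoly n b s (t x y)) \<le> fpoly n b s 1" if x: "x \<in> C" for x
  proof -
    have "(\<Sum>y\<in>C. fpoly n b s (t x y)) = fpoly n b s (t x x) + (\<Sum>y\<in>C - {x}. fpoly n b s (t x y))"
      using fC x by (simp add: sum.remove)
    also have "\<dots> \<le> fpoly n b s 1 + 0"
      using off x by (intro add_mono sum_nonpos) (auto simp: diag)
    finally show ?thesis by simp
  qed
  have "(\<Sum>x\<in>C. \<Sum>y\<in>C. fpoly n b s (t x y)) \<le> (\<Sum>x\<in>C. fpoly n b s 1)"
    using row by (intro sum_mono) auto
  also have "\<dots> = real (card C) * fpoly n b s 1" by simp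
  finally show ?thesis using lower by linarith
qed

theorem theorem5:
  fixes n q :: nat and d b :: int and s j :: real and fc :: "nat \<Rightarrow> real"
  assumes hn: "n \<ge> 3" and hq: "q \<ge> 2"
    and hj: "j = jpar n q d"
    and hjrange: "(S1 n q - real q) / 2 \<le> j" "j < (S2 n q + real q) / 2 - 1"
    and hs: "s = 1 - 2 * of_int d / real n"
    and hb: "d0par n q j < of_int b" "of_int b \<le> d0par n q j + 1"
    and hexp: "\<forall>t. fpoly n b s t = (\<Sum>i\<le>4. fc i * Qpoly n q i t)"
    and hpos: "\<forall>i\<in>{1..4}. fc i \<ge> 0"
  shows "real (A_q q n s) \<le>
    (real q ^ 3 * of_int b * (of_int b - 1) * (real n * (real q - 1) - j - real q + 2)) /
    ((1 - j) * (real q)^2 * (of_int b)^2 + C1 n q j * real q * of_int b - C2 n q j)"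
proof -
  have n0: "n > 0" using hn by simp
  have q1: "q \<ge> 1" using hq by simp
  define J :: int where "J = int q * (int n - 1 - d) - (int n - 2)"
  have jJ: "j = of_int J" unfolding hj jpar_def J_def using hn by (simp add: of_nat_diff)
  have S1q: "real q < S1 n q"
  proof -
    have "(real q)^2 < (real q)^2 + 4 * (real q - 1) * (real n - 2)" using hn hq by simp
    then show ?thesis unfolding S1_def by (rule real_less_rsqrt)
  qed
  have "0 < (S1 n q - real q) / 2" using S1q by simp
  then have jpos: "j > 0" using hjrange(1) by linarith
  then have J1: "J \<ge> 1" unfolding jJ by simp
  then have j1: "j \<ge> 1" unfolding jJ by simp
  have G: "(real q - 1) * (real n - 2) + real q * j - j^2 > 0"
  proof (cases "2 * j + 2 - real q \<ge> 0")
    case True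
    have X: "(real q)^2 + 4 * (real q - 1) * (real n - 3) \<ge> 0" using hn hq by simp
    have "2 * j + 2 - real q < S2 n q" using hjrange(2) by (simp add: field_simps)
    then have "(2 * j + 2 - real q)^2 < (S2 n q)^2" using True by (intro power_strict_mono) auto
    also have "(S2 n q)^2 = (real q)^2 + 4 * (real q - 1) * (real n - 3)" unfolding S2_def using X by simp
    finally have "(2 * j + 2 - real q)^2 < (real q)^2 + 4 * (real q - 1) * (real n - 3)" .
    then have "4*j^2 + 8*j + 4 - 4*real q*j - 4*real q < 4 * (real q - 1) * (real n - 3)"
      by (simp add: power2_eq_square algebra_simps)
    then show ?thesis using j1 by (simp add: power2_eq_square algebra_simps)
  next
    case False
    then have "j < real q" by linarith
    then have "j * (j - real q) < 0" using jpos by (simp add: mult_pos_neg)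
    moreover have "(real q - 1) * (real n - 2) \<ge> 0" using hn hq by simp
    ultimately show ?thesis by (simp add: power2_eq_square algebra_simps)
  qed
  define den where "den = (1 - j) * (real q)^2 * (of_int b)^2 + C1 n q j * real q * of_int b - C2 n q j"
  have den_pos': "den > 0"
    unfolding den_def C1_def C2_def
    by (rule den_pos[of "real q" "real n" j]) (use hq hn j1 G hb in \<open>auto simp: d0par_def\<close>)
  define f1 where "f1 = fpoly n b s 1"
  have f1: "f1 = 16 * real n * of_int b * (of_int b - 1) * of_int d / real n ^ 4"
    using fpoly_at[OF n0 hs, of b 0] unfolding f1_def by simp
  have E: "(\<Sum>k<5. Wt n q k * ((real n - real k) * (of_int b - real k) * (of_int b - 1 - real k) * (of_int d - real k)))
     = 24 * real n * den"
    unfolding sum5 den_def C1_def C2_def jJ J_def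
    by (simp only: W_0 W_1 W_2 W_3 W_4 of_nat_0 of_nat_1 of_nat_numeral of_int_diff of_int_mult of_int_of_nat_eq of_int_1 of_int_numeral of_nat_diff) algebra
  have "24 * real q ^ 4 * fc 0 = (\<Sum>k<5. Wt n q k * fpoly n b s (1 - 2 * real k / real n))"
    by (rule fc0_eq[OF n0 hexp])
  also have "\<dots> = (\<Sum>k<5. Wt n q k * ((real n - real k) * (of_int b - real k) * (of_int b - 1 - real k) * (of_int d - real k))) * 16 / real n ^ 4"
    unfolding fpoly_at[OF n0 hs] sum_distrib_right sum_divide_distrib by (intro sum.cong refl) (simp add: field_simps)
  also have "\<dots> = 24 * real n * den * 16 / real n ^ 4" unfolding E ..
  finally have fc0: "fc 0 = 16 * den / (real n ^ 3 * real q ^ 4)"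
    using n0 hq by (simp add: field_simps power_eq_if)
  have fc0pos: "fc 0 > 0" unfolding fc0 using den_pos' n0 hq by simp
  have RHS: "(real q ^ 3 * of_int b * (of_int b - 1) * (real n * (real q - 1) - j - real q + 2)) / den = f1 / fc 0"
  proof -
    have "real n * (real q - 1) - j - real q + 2 = real q * of_int d"
      unfolding jJ J_def using hn by (simp add: of_nat_diff algebra_simps)
    then show ?thesis unfolding f1 fc0 using n0 hq den_pos' by (simp add: field_simps power_eq_if)
  qed
  have bound: "real (card C) \<le> f1 / fc 0" if C: "is_code q n s C" "card C \<ge> 1" for C
  proof -
    have "fc 0 * real (card C) ^ 2 \<le> real (card C) * f1"
      unfolding f1_def by (rule lp_bound[OF n0 q1 hs hexp hpos C(1)])
    then have "fc 0 * real (card C) \<le> f1" using C(2) by (simp add: power2_eq_square mult_ac)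
    then show ?thesis using fc0pos by (simp add: field_simps)
  qed
  have single: "is_code q n s {replicate n 0}"
    unfolding is_code_def hamming_space_def using hq by auto
  have f1nn: "1 \<le> f1 / fc 0" using bound[OF single] by simp
  define SS where "SS = {card C | C. is_code q n s C}"
  have fin: "finite SS"
  proof (rule finite_subset)
    show "SS \<subseteq> {..card (hamming_space q n)}"
      unfolding SS_def is_code_def using hs_finite by (auto intro: card_mono)
  qed simp
  have ne: "SS \<noteq> {}" unfolding SS_def using single by blast
  obtain C where C: "is_code q n s C" "card C = Max SS"
    using Max_in[OF fin ne] unfolding SS_def by auto
  have "real (Max SS) \<le> f1 / fc 0"
  proof (cases "card C \<ge> 1")
    case True then show ?thesis using bound[OF C(1)] C(2) by simp
  next
    case False then show ?thesis using C(2) f1nn by simp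
  qed
  then show ?thesis unfolding A_q_def SS_def[symmetric] RHS[unfolded den_def] .
qed


end
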